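(* Let $0<f_1<f_2<f_3$ and $2h=1$. For values $(f_L,g_L)$ with $f_L<1$ in the image of the reduced Lamé momentum map $(F_L,G_L):M_h\to\mathbb R^2$, set $r_2=g_L/(1-f_L)$ and define $$p_1(s)^2=\frac{f_L-s}{4(s-1)^2s},\qquad p_k(s)^2=-\frac{(f_L-1)s+g_L}{4(f_3-s)(s-f_1)(s-f_2)}\ (k=2,3),$$ $$J_1=\frac2\pi\int_0^{f_L}p_1\,ds,\quad J_2=\frac2\pi\int_{f_1}^{\min(r_2,f_2)}p_2\,ds,\quad J_3=\frac2\pi\int_{\max(f_2,r_2)}^{f_3}p_3\,ds.$$ Then for each fixed $r_2$, the points of the image of the momentum map lying on the straight line $F_L=1-\frac{1}{r_2}G_L$ are mapped by $(J_1,J_2,J_3)$ into a straight line in action space $\mathbb R^3$.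
   Context: $\mathbf L=(\ell_{12},\ell_{13},\ell_{14},\ell_{23},\ell_{24},\ell_{34})\in\mathbb R^6$; $M_h=\{\mathbf L:\sum_{i<j}\ell_{ij}^2=2h,\ \ell_{12}\ell_{34}-\ell_{13}\ell_{24}+\ell_{14}\ell_{23}=0\}\cong S^2\times S^2$ is a symplectic leaf of $\mathfrak{so}(4)^*$ (Lie–Poisson bracket). The reduced Lamé system is $F_L=\ell_{12}^2+\ell_{13}^2+\ell_{14}^2$, $G_L=f_1\ell_{34}^2+f_2\ell_{24}^2+f_3\ell_{23}^2$. The $J_i$ are its (continuous) action variables, obtained from separation of the geodesic flow on $S^3$ in Lamé coordinates; the radicands are nonnegative on the integration intervals. *)

theory Defs
  imports "HOL-Analysis.Analysis"
begin

text \<open>A point L = (l12,l13,l14,l23,l24,l34) of so(4)^* = R^6, as a 6-tuple.\<close>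
type_synonym so4 = "real \<times> real \<times> real \<times> real \<times> real \<times> real"

definition M_h :: "real \<Rightarrow> so4 set" where
  "M_h h = {(l12,l13,l14,l23,l24,l34).
      l12^2 + l13^2 + l14^2 + l23^2 + l24^2 + l34^2 = 2*h \<and>
      l12*l34 - l13*l24 + l14*l23 = 0}"

definition F_L :: "so4 \<Rightarrow> real" where
  "F_L L = (case L of (l12,l13,l14,l23,l24,l34) \<Rightarrow> l12^2 + l13^2 + l14^2)"

definition G_L :: "real \<Rightarrow> real \<Rightarrow> real \<Rightarrow> so4 \<Rightarrow> real" where
  "G_L f1 f2 f3 L = (case L of (l12,l13,l14,l23,l24,l34) \<Rightarrow>
      f1*l34^2 + f2*l24^2 + f3*l23^2)"

definition lame_image :: "real \<Rightarrow> real \<Rightarrow> real \<Rightarrow> real \<Rightarrow> (real \<times> real) set" where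
  "lame_image f1 f2 f3 h = (\<lambda>L. (F_L L, G_L f1 f2 f3 L)) ` M_h h"

text \<open>p_1 and p_2 = p_3 as (nonnegative) square roots of the given radicands.\<close>
definition p1 :: "real \<Rightarrow> real \<Rightarrow> real" where
  "p1 fL s = sqrt ((fL - s) / (4 * (s - 1)^2 * s))"

definition p23 :: "real \<Rightarrow> real \<Rightarrow> real \<Rightarrow> real \<Rightarrow> real \<Rightarrow> real \<Rightarrow> real" where
  "p23 f1 f2 f3 fL gL s = sqrt (- ((fL - 1) * s + gL) / (4 * (f3 - s) * (s - f1) * (s - f2)))"

definition J1 :: "real \<Rightarrow> real" where
  "J1 fL = 2 / pi * integral {0..fL} (p1 fL)"

definition J2 :: "real \<Rightarrow> real \<Rightarrow> real \<Rightarrow> real \<Rightarrow> real \<Rightarrow> real" where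
  "J2 f1 f2 f3 fL gL = 2 / pi *
     integral {f1..min (gL / (1 - fL)) f2} (p23 f1 f2 f3 fL gL)"

definition J3 :: "real \<Rightarrow> real \<Rightarrow> real \<Rightarrow> real \<Rightarrow> real \<Rightarrow> real" where
  "J3 f1 f2 f3 fL gL = 2 / pi *
     integral {max f2 (gL / (1 - fL))..f3} (p23 f1 f2 f3 fL gL)"

definition J_map :: "real \<Rightarrow> real \<Rightarrow> real \<Rightarrow> real \<Rightarrow> real \<Rightarrow> real \<times> real \<times> real" where
  "J_map f1 f2 f3 fL gL = (J1 fL, J2 f1 f2 f3 fL gL, J3 f1 f2 f3 fL gL)"

end

theory Submission
  imports Defs
begin

lemma d_asq:
  assumes g: "(g has_real_derivative g') (at x)" and "0 < g x" "g x < 1"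
  shows "((\<lambda>s. arcsin (sqrt (g s))) has_real_derivative g' / (2 * sqrt (g x * (1 - g x)))) (at x)"
proof -
  have s: "sqrt (g x) < 1" using assms by (metis real_sqrt_less_iff real_sqrt_one)
  have s2: "- 1 < sqrt (g x)" using assms by (smt (verit) real_sqrt_ge_zero)
  have "((\<lambda>s. arcsin (sqrt (g s))) has_real_derivative
          inverse (sqrt (1 - (sqrt (g x))\<^sup>2)) * (inverse (sqrt (g x)) / 2 * g')) (at x)"
    by (rule DERIV_chain2[OF DERIV_arcsin[OF s2 s] DERIV_chain2[OF DERIV_real_sqrt g]]) (use assms in auto)
  moreover have "inverse (sqrt (1 - (sqrt (g x))\<^sup>2)) * (inverse (sqrt (g x)) / 2 * g')
     = g' / (2 * sqrt (g x * (1 - g x)))"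
  proof -
    have "sqrt (g x * (1 - g x)) = sqrt (g x) * sqrt (1 - g x)" by (simp add: real_sqrt_mult)
    moreover have "(sqrt (g x))\<^sup>2 = g x" using assms by simp
    ultimately show ?thesis using assms by (simp add: field_simps)
  qed
  ultimately show ?thesis by (simp only:)
qed

lemma alg_id:
  fixes A B q a s :: real
  assumes "A > 0" "B > 0" "q > 0" "a > 0" "s < 1" "q * q = 1 - a" "A * A = s" "B * B = a - s"
  shows "1/a/(2*(A*B/a)) - q*((1-a)/(a*(1-s)^2)/(2*(q*(A*B)/(a*(1-s))))) = B/(2*(1-s)*A)"
proof -
  have "1/a/(2*(A*B/a)) = 1/(2*A*B)" using assms by (simp add: field_simps)
  moreover have "q*((1-a)/(a*(1-s)^2)/(2*(q*(A*B)/(a*(1-s))))) = (1-a)/(2*(1-s)*A*B)"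
  proof -
    have gen: "q*((1-a)/(a*t^2)/(2*(q*(A*B)/(a*t)))) = (1-a)/(2*t*A*B)" if "t > 0" for t
      using assms that by (simp add: field_simps power2_eq_square)
    show ?thesis using gen[of "1 - s"] assms by simp
  qed
  moreover have "1/(2*A*B) - (1-a)/(2*(1-s)*A*B) = (B*B)/(2*(1-s)*A*B)"
  proof -
    have gen: "1/(2*A*B) - (1-a)/(2*t*A*B) = (t - 1 + a)/(2*t*A*B)" if "t > 0" for t
      using assms that by (simp add: field_simps)
    show ?thesis using gen[of "1 - s"] assms by simp
  qed
  moreover have "(B*B)/(2*(1-s)*A*B) = B/(2*(1-s)*A)" using assms by (simp add: field_simps)
  ultimately show ?thesis by simp
qed

lemma J1_val:
  assumes "0 < a" "a < 1"
  shows "(p1 a has_integral (pi/2 * (1 - sqrt (1 - a)))) {0..a}"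
proof -
  define F where "F s = arcsin (sqrt (s / a)) - sqrt (1 - a) * arcsin (sqrt ((1 - a) * s / (a * (1 - s))))" for s
  have F0: "F 0 = 0" by (simp add: F_def)
  have Fa: "F a = pi/2 * (1 - sqrt (1 - a))" using assms by (simp add: F_def algebra_simps)
  have cont: "continuous_on {0..a} F"
    unfolding F_def using assms
    apply (intro continuous_intros)
    apply (auto simp: divide_simps)
    apply (rule order.trans[OF _ real_sqrt_ge_zero]; simp)
    apply (rule order.trans[OF _ real_sqrt_ge_zero]; simp)
    apply (simp add: algebra_simps)
    done
  have der: "(F has_real_derivative p1 a s) (at s)" if s: "0 < s" "s < a" for s
  proof -
    have d1: "((\<lambda>s. arcsin (sqrt (s / a))) has_real_derivative (1/a) / (2 * sqrt (s/a * (1 - s/a)))) (at s)"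
      apply (rule d_asq) using s assms by (auto intro!: derivative_eq_intros)
    have w: "0 < (1 - a) * s / (a * (1 - s))" "(1 - a) * s / (a * (1 - s)) < 1"
      using s assms by (auto simp: divide_simps algebra_simps)
    have dw: "((\<lambda>s. (1 - a) * s / (a * (1 - s))) has_real_derivative ((1 - a) / (a * (1 - s)^2))) (at s)"
      using s assms apply (auto intro!: derivative_eq_intros)
      apply (simp add: divide_simps power2_eq_square)
      apply (simp add: algebra_simps)
      done
    have d2: "((\<lambda>s. arcsin (sqrt ((1 - a) * s / (a * (1 - s))))) has_real_derivative
         ((1 - a) / (a * (1 - s)^2)) / (2 * sqrt ((1 - a) * s / (a * (1 - s)) * (1 - (1 - a) * s / (a * (1 - s)))))) (at s)"
      by (rule d_asq[OF dw w])
    have D: "(F has_real_derivative (1/a) / (2 * sqrt (s/a * (1 - s/a))) - sqrt (1 - a) *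
         (((1 - a) / (a * (1 - s)^2)) / (2 * sqrt ((1 - a) * s / (a * (1 - s)) * (1 - (1 - a) * s / (a * (1 - s))))))) (at s)"
      unfolding F_def by (intro DERIV_diff DERIV_cmult d1 d2)
    define R where "R = sqrt s * sqrt (a - s)"
    define q where "q = sqrt (1 - a)"
    have R0: "R > 0" using s by (simp add: R_def)
    have q0: "q > 0" using assms by (simp add: q_def)
    have qq: "q * q = 1 - a" using assms by (simp add: q_def)
    have e1: "sqrt (s/a * (1 - s/a)) = R / a"
    proof -
      have "s/a * (1 - s/a) = (s * (a - s)) / a^2" using assms by (simp add: field_simps power2_eq_square)
      thus ?thesis using assms by (simp add: R_def real_sqrt_mult real_sqrt_divide)
    qed
    have e2: "sqrt ((1 - a) * s / (a * (1 - s)) * (1 - (1 - a) * s / (a * (1 - s)))) = q * R / (a * (1 - s))"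
    proof -
      have "(1 - a) * s / (a * (1 - s)) * (1 - (1 - a) * s / (a * (1 - s))) = ((1 - a) * s * (a - s)) / (a * (1 - s))^2"
        using assms s by (simp add: field_simps power2_eq_square)
      thus ?thesis using assms s by (simp add: R_def q_def real_sqrt_mult real_sqrt_divide)
    qed
    have e3: "p1 a s = sqrt (a - s) / (2 * (1 - s) * sqrt s)"
    proof -
      have "(a - s) / (4 * (s - 1)^2 * s) = (a - s) / (2 * (1 - s) * sqrt s)^2"
      proof -
        have "(2 * (1 - s) * sqrt s)^2 = 4 * (s - 1)^2 * s" using s
          by (simp only: power_mult_distrib real_sqrt_pow2[of s] less_imp_le power2_commute[of 1 s]) simp
        thus ?thesis by simp
      qed
      thus ?thesis using s assms by (simp add: p1_def real_sqrt_divide)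
    qed
    have e4: "sqrt (a - s) * sqrt (a - s) = a - s" using s by simp
    have "(1/a) / (2 * sqrt (s/a * (1 - s/a))) - sqrt (1 - a) *
         (((1 - a) / (a * (1 - s)^2)) / (2 * sqrt ((1 - a) * s / (a * (1 - s)) * (1 - (1 - a) * s / (a * (1 - s))))))
         = p1 a s"
      unfolding e1 e2 e3 q_def[symmetric] R_def
      by (rule alg_id) (use q0 qq s assms e4 in auto)
    with D show ?thesis by simp
  qed
  have "(p1 a has_integral (F a - F 0)) {0..a}"
    by (rule fundamental_theorem_of_calculus_interior_strong[of "{}"])
       (use assms der cont in \<open>auto simp: has_real_derivative_iff_has_vector_derivative\<close>)
  then show ?thesis using F0 Fa by simp
qed

lemma J1_formula:
  assumes "0 \<le> a" "a < 1"
  shows "J1 a = 1 - sqrt (1 - a)"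
proof (cases "a = 0")
  case True thus ?thesis by (simp add: J1_def)
next
  case False
  hence I: "integral {0..a} (p1 a) = pi/2 * (1 - sqrt (1 - a))"
    using J1_val[of a] assms by (simp add: integral_unique)
  show ?thesis unfolding J1_def I by simp
qed

theorem lemma14:
  fixes f1 f2 f3 h r2 :: real
  assumes "0 < f1" and "f1 < f2" and "f2 < f3" and "2 * h = 1"
  shows "\<exists>a d :: real \<times> real \<times> real. d \<noteq> 0 \<and>
           (\<forall>(fL, gL) \<in> lame_image f1 f2 f3 h.
              fL < 1 \<and> fL = 1 - gL / r2 \<and> gL / (1 - fL) = r2 \<longrightarrow>
              (\<exists>t::real. J_map f1 f2 f3 fL gL = a + t *\<^sub>R d))"
proof -
  define q where "q s = sqrt ((s - r2) / (4 * (f3 - s) * (s - f1) * (s - f2)))" for s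
  define C2 where "C2 = 2 / pi * integral {f1..min r2 f2} q"
  define C3 where "C3 = 2 / pi * integral {max f2 r2..f3} q"
  show ?thesis
  proof (intro exI conjI)
    show "((-1, C2, C3) :: real \<times> real \<times> real) \<noteq> 0" by (simp add: zero_prod_def)
    show "\<forall>(fL, gL) \<in> lame_image f1 f2 f3 h.
              fL < 1 \<and> fL = 1 - gL / r2 \<and> gL / (1 - fL) = r2 \<longrightarrow>
              (\<exists>t::real. J_map f1 f2 f3 fL gL = (1, 0, 0) + t *\<^sub>R (-1, C2, C3))"
    proof (rule ballI)
      fix x assume xim: "x \<in> lame_image f1 f2 f3 h"
      obtain fL gL where x: "x = (fL, gL)" by (cases x)
      have im: "(fL, gL) \<in> lame_image f1 f2 f3 h" using xim x by simp
      show "case x of (fL, gL) \<Rightarrow> fL < 1 \<and> fL = 1 - gL / r2 \<and> gL / (1 - fL) = r2 \<longrightarrow>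
              (\<exists>t::real. J_map f1 f2 f3 fL gL = (1, 0, 0) + t *\<^sub>R (-1, C2, C3))"
        unfolding x prod.case
      proof (intro impI)
      assume "fL < 1 \<and> fL = 1 - gL / r2 \<and> gL / (1 - fL) = r2"
      hence h1: "fL < 1" "fL = 1 - gL / r2" "gL / (1 - fL) = r2" by auto
      have f0: "0 \<le> fL" using im by (auto simp: lame_image_def F_L_def)
      have g: "gL = r2 * (1 - fL)" using h1 by (simp add: field_simps)
      define u where "u = sqrt (1 - fL)"
      have pe: "p23 f1 f2 f3 fL gL = (\<lambda>s. q s * u)"
      proof
        fix s
        have E: "- ((fL - 1) * s + gL) / (4 * (f3 - s) * (s - f1) * (s - f2))
              = (1 - fL) * ((s - r2) / (4 * (f3 - s) * (s - f1) * (s - f2)))"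
          unfolding g by (simp add: algebra_simps)
        show "p23 f1 f2 f3 fL gL s = q s * u"
          by (simp only: p23_def q_def u_def E real_sqrt_mult) (simp add: mult.commute)
      qed
      have "J_map f1 f2 f3 fL gL = (1, 0, 0) + u *\<^sub>R (-1, C2, C3)"
        unfolding J_map_def J2_def J3_def pe J1_formula[OF f0 h1(1)] h1(3) C2_def C3_def u_def
        by simp
      thus "\<exists>t. J_map f1 f2 f3 fL gL = (1, 0, 0) + t *\<^sub>R (-1, C2, C3)" by blast
    qed
    qed
  qed
qed

end
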